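(* Let $G=(V,E)$ be a graph and consider an exponential bottleneck routing game on $G$ with $N$ players, where player $\pi_i$ has a strategy set $\mathcal{P}_i$ of paths in $G$ from $u_i$ to $v_i$, and let $L=\max\{|p| : p\in \bigcup_i \mathcal{P}_i\}$ be the maximum length of a path in the players' strategy sets. Then the price of anarchy (over pure Nash-routings, with respect to the social cost $C$) satisfies $$PoA = O(\log L \cdot \log |E|),$$ i.e. for every Nash-routing $\mathbf{p}$ and every routing $\mathbf{p}^*$ minimizing the social cost, $C(\mathbf{p})/C(\mathbf{p}^* ) = O(\log L\cdot \log|E|)$, where the implied constant is absolute.
   Context: A routing (pure strategy profile) is $\mathbf{p}=[p_1,\dots,p_N]$ with $p_i\in\mathcal{P}_i$. For an edge $e$, its congestion $C_e(\mathbf{p})$ is the number of paths of $\mathbf{p}$ using $e$. The social cost is $C(\mathbf{p})=\max_{e\in E} C_e(\mathbf{p})$. In an exponential bottleneck game the cost of player $\pi_i$ is $\widetilde C_i(\mathbf{p})=\sum_{e\in p_i} 2^{C_e(\mathbf{p})}$. A routing $\mathbf{p}$ is a Nash-routing if no player can lower its cost by unilaterally changing its path to another path of its strategy set: $\widetilde C_i(\mathbf{p})\le \widetilde C_i(p_i';\mathbf{p}_{-i})$ for all $i$ and all $p_i'\in\mathcal{P}_i$. The price of anarchy is $\sup_{\mathbf{p}} C(\mathbf{p})/C^*$ over Nash-routings $\mathbf{p}$, where $C^*$ is the minimum of $C$ over all routings. Logarithms are base 2. *)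

theory Defs
  imports Complex_Main
begin

(* A finite directed multigraph G = (V,E): vertices and edges are labelled by
   natural numbers (WLOG, any finite graph is isomorphic to such a one);
   edge e goes from src e to dst e. *)
definition graph :: "nat set \<Rightarrow> nat set \<Rightarrow> (nat \<Rightarrow> nat) \<Rightarrow> (nat \<Rightarrow> nat) \<Rightarrow> bool" where
  "graph V E src dst \<longleftrightarrow> finite V \<and> finite E \<and> (\<forall>e\<in>E. src e \<in> V \<and> dst e \<in> V)"

definition is_path :: "nat set \<Rightarrow> (nat \<Rightarrow> nat) \<Rightarrow> (nat \<Rightarrow> nat) \<Rightarrow> nat \<Rightarrow> nat \<Rightarrow> nat list \<Rightarrow> bool" where
  "is_path E src dst u v p \<longleftrightarrow> set p \<subseteq> E \<and>
     (p = [] \<longrightarrow> u = v) \<and>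
     (p \<noteq> [] \<longrightarrow> src (hd p) = u \<and> dst (last p) = v \<and>
        (\<forall>j. j + 1 < length p \<longrightarrow> dst (p ! j) = src (p ! (j + 1))) \<and>
        distinct (map src p @ [dst (last p)]))"

definition routing :: "nat \<Rightarrow> (nat \<Rightarrow> nat list set) \<Rightarrow> (nat \<Rightarrow> nat list) \<Rightarrow> bool" where
  "routing N S p \<longleftrightarrow> (\<forall>i<N. p i \<in> S i)"

definition congestion :: "nat \<Rightarrow> (nat \<Rightarrow> nat list) \<Rightarrow> nat \<Rightarrow> nat" where
  "congestion N p e = card {i. i < N \<and> e \<in> set (p i)}"

definition social_cost :: "nat set \<Rightarrow> nat \<Rightarrow> (nat \<Rightarrow> nat list) \<Rightarrow> nat" where
  "social_cost E N p = Max (insert 0 (congestion N p ` E))"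

definition player_cost :: "nat \<Rightarrow> (nat \<Rightarrow> nat list) \<Rightarrow> nat \<Rightarrow> nat" where
  "player_cost N p i = (\<Sum>e\<in>set (p i). 2 ^ congestion N p e)"

definition nash_routing :: "nat \<Rightarrow> (nat \<Rightarrow> nat list set) \<Rightarrow> (nat \<Rightarrow> nat list) \<Rightarrow> bool" where
  "nash_routing N S p \<longleftrightarrow> routing N S p \<and>
     (\<forall>i<N. \<forall>q\<in>S i. player_cost N p i \<le> player_cost N (p(i := q)) i)"

definition optimal_routing :: "nat set \<Rightarrow> nat \<Rightarrow> (nat \<Rightarrow> nat list set) \<Rightarrow> (nat \<Rightarrow> nat list) \<Rightarrow> bool" where
  "optimal_routing E N S p \<longleftrightarrow> routing N S p \<and>
     (\<forall>q. routing N S q \<longrightarrow> social_cost E N p \<le> social_cost E N q)"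

definition max_path_length :: "nat \<Rightarrow> (nat \<Rightarrow> nat list set) \<Rightarrow> nat" where
  "max_path_length N S = Max (insert 0 {length q | q i. i < N \<and> q \<in> S i})"

end

theory Submission
  imports Defs
begin

lemma double_count:
  assumes "finite E" "\<And>i. i < N \<Longrightarrow> set (q i) \<subseteq> E"
  shows "(\<Sum>i<N. \<Sum>e\<in>set (q i). f e) = (\<Sum>e\<in>E. congestion N q e * (f e :: nat))"
proof -
  have "(\<Sum>i<N. \<Sum>e\<in>set (q i). f e) = (\<Sum>i<N. \<Sum>e\<in>E. if e \<in> set (q i) then f e else 0)"
  proof (rule sum.cong[OF refl])
    fix i assume "i \<in> {..<N}"
    then have "set (q i) \<subseteq> E" using assms by auto
    then have "set (q i) = {e \<in> E. e \<in> set (q i)}" by auto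
    then show "(\<Sum>e\<in>set (q i). f e) = (\<Sum>e\<in>E. if e \<in> set (q i) then f e else 0)"
      using sum.inter_filter[OF assms(1), of f "\<lambda>e. e \<in> set (q i)"] by simp
  qed
  also have "\<dots> = (\<Sum>e\<in>E. \<Sum>i<N. if e \<in> set (q i) then f e else 0)"
    by (rule sum.swap)
  also have "\<dots> = (\<Sum>e\<in>E. congestion N q e * f e)"
  proof (rule sum.cong[OF refl])
    fix e
    have "(\<Sum>i<N. if e \<in> set (q i) then f e else 0) = (\<Sum>i\<in>{i\<in>{..<N}. e \<in> set (q i)}. f e)"
      by (simp add: sum.inter_filter[symmetric])
    also have "\<dots> = card {i\<in>{..<N}. e \<in> set (q i)} * f e"
      by simp
    also have "{i\<in>{..<N}. e \<in> set (q i)} = {i. i < N \<and> e \<in> set (q i)}" by auto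
    finally show "(\<Sum>i<N. if e \<in> set (q i) then f e else 0) = congestion N q e * f e"
      by (simp add: congestion_def)
  qed
  finally show ?thesis .
qed

lemma cong_upd:
  "congestion N (p(i := q)) e \<le> congestion N p e + 1"
proof -
  have "{j. j < N \<and> e \<in> set ((p(i := q)) j)} \<subseteq> insert i {j. j < N \<and> e \<in> set (p j)}"
    by auto
  then have "card {j. j < N \<and> e \<in> set ((p(i := q)) j)} \<le> card (insert i {j. j < N \<and> e \<in> set (p j)})"
    by (rule card_mono[rotated]) auto
  also have "\<dots> \<le> card {j. j < N \<and> e \<in> set (p j)} + 1"
    by (simp add: card_insert_if)
  finally show ?thesis by (simp add: congestion_def)
qed

lemma deviation:
  assumes "nash_routing N S p" "i < N" "q \<in> S i"
  shows "player_cost N p i \<le> (\<Sum>e\<in>set q. 2 * 2 ^ congestion N p e)"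
proof -
  have "player_cost N p i \<le> player_cost N (p(i := q)) i"
    using assms unfolding nash_routing_def by blast
  also have "\<dots> = (\<Sum>e\<in>set q. 2 ^ congestion N (p(i := q)) e)"
    by (simp add: player_cost_def)
  also have "\<dots> \<le> (\<Sum>e\<in>set q. 2 * 2 ^ congestion N p e)"
  proof (rule sum_mono)
    fix e
    have "(2::nat) ^ congestion N (p(i := q)) e \<le> 2 ^ (congestion N p e + 1)"
      by (rule power_increasing[OF cong_upd]) auto
    then show "(2::nat) ^ congestion N (p(i := q)) e \<le> 2 * 2 ^ congestion N p e" by simp
  qed
  finally show ?thesis .
qed

lemma path_sub: "is_path E src dst u v q \<Longrightarrow> set q \<subseteq> E"
  by (simp add: is_path_def)

lemma cong_le_sc:
  assumes "finite E" "e \<in> E"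
  shows "congestion N q e \<le> social_cost E N q"
  unfolding social_cost_def using assms by (intro Max_ge) auto

lemma key_ineq:
  assumes fin: "finite E"
    and paths: "\<And>i q. i < N \<Longrightarrow> q \<in> S i \<Longrightarrow> set q \<subseteq> E"
    and nash: "nash_routing N S p" and rs: "routing N S ps"
  shows "(\<Sum>e\<in>E. congestion N p e * 2 ^ congestion N p e)
     \<le> (\<Sum>e\<in>E. 2 * social_cost E N ps * 2 ^ congestion N p e)"
proof -
  have rp: "routing N S p" using nash by (simp add: nash_routing_def)
  have sp: "\<And>i. i < N \<Longrightarrow> set (p i) \<subseteq> E" using rp paths by (auto simp: routing_def)
  have sps: "\<And>i. i < N \<Longrightarrow> set (ps i) \<subseteq> E" using rs paths by (auto simp: routing_def)
  have "(\<Sum>e\<in>E. congestion N p e * 2 ^ congestion N p e) = (\<Sum>i<N. player_cost N p i)"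
    unfolding player_cost_def using double_count[OF fin sp] by simp
  also have "\<dots> \<le> (\<Sum>i<N. \<Sum>e\<in>set (ps i). 2 * 2 ^ congestion N p e)"
    by (rule sum_mono, rule deviation[OF nash]) (use rs in \<open>auto simp: routing_def\<close>)
  also have "\<dots> = (\<Sum>e\<in>E. congestion N ps e * (2 * 2 ^ congestion N p e))"
    by (rule double_count[OF fin sps])
  also have "\<dots> \<le> (\<Sum>e\<in>E. 2 * social_cost E N ps * 2 ^ congestion N p e)"
  proof (rule sum_mono)
    fix e assume "e \<in> E"
    then have "congestion N ps e \<le> social_cost E N ps" using cong_le_sc fin by blast
    then show "congestion N ps e * (2 * 2 ^ congestion N p e) \<le> 2 * social_cost E N ps * 2 ^ congestion N p e"
      by (simp add: mult_right_mono)
  qed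
  finally show ?thesis .
qed

lemma term_lb:
  "- (int (2 * D) * 2 ^ (2 * D)) \<le> (int c - int (2 * D)) * 2 ^ c"
proof (cases "c \<ge> 2 * D")
  case True
  then have "0 \<le> (int c - int (2 * D)) * 2 ^ c" by simp
  moreover have "0 \<le> int (2 * D) * 2 ^ (2 * D)" by simp
  ultimately show ?thesis by linarith
next
  case False
  then have "(2::int) ^ c \<le> 2 ^ (2 * D)" by (intro power_increasing) auto
  moreover have "int (2*D) - int c \<le> int (2 * D)" by simp
  ultimately have "(int (2*D) - int c) * 2 ^ c \<le> int (2 * D) * 2 ^ (2 * D)"
    using False by (intro mult_mono) auto
  then show ?thesis by (simp add: algebra_simps)
qed

lemma arith_core:
  fixes c :: "nat \<Rightarrow> nat"
  assumes fin: "finite E" and e0: "e0 \<in> E"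
    and ineq: "(\<Sum>e\<in>E. c e * 2 ^ c e) \<le> (\<Sum>e\<in>E. 2 * D * 2 ^ c e)"
  shows "(int (c e0) - int (2*D)) * 2 ^ c e0 \<le> int (card E) * (int (2 * D) * 2 ^ (2 * D))"
proof -
  let ?g = "\<lambda>e. (int (c e) - int (2*D)) * 2 ^ c e"
  have "int (\<Sum>e\<in>E. c e * 2 ^ c e) \<le> int (\<Sum>e\<in>E. 2 * D * 2 ^ c e)" using ineq by (simp only: of_nat_le_iff)
  then have "(\<Sum>e\<in>E. int (c e) * 2 ^ c e) \<le> (\<Sum>e\<in>E. int (2 * D) * 2 ^ c e)"
    by (simp only: of_nat_sum of_nat_mult of_nat_power of_nat_numeral)
  then have s0: "(\<Sum>e\<in>E. ?g e) \<le> 0"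
    by (simp add: algebra_simps sum_subtractf)
  have "(\<Sum>e\<in>E. ?g e) = ?g e0 + (\<Sum>e\<in>E - {e0}. ?g e)"
    using fin e0 by (simp add: sum.remove)
  moreover have "(\<Sum>e\<in>E - {e0}. ?g e) \<ge> (\<Sum>e\<in>E - {e0}. - (int (2 * D) * 2 ^ (2 * D)))"
    by (rule sum_mono) (rule term_lb)
  moreover have "(\<Sum>e\<in>E - {e0}. - (int (2 * D) * 2 ^ (2 * D))) = - (int (card E - 1) * (int (2 * D) * 2 ^ (2 * D)))"
    using fin e0 by simp
  moreover have "int (card E - 1) * (int (2 * D) * 2 ^ (2 * D)) \<le> int (card E) * (int (2 * D) * 2 ^ (2 * D))"
    by (intro mult_right_mono) auto
  ultimately show ?thesis using s0 by linarith
qed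

lemma final_bound:
  fixes C D m :: nat and a b :: real
  assumes X: "(int C - int (2*D)) * 2 ^ C \<le> int m * (int (2 * D) * 2 ^ (2 * D))"
    and a: "a \<ge> 1" and b: "b \<ge> 1" and bm: "m > 0 \<Longrightarrow> log 2 (real m) \<le> b"
  shows "real C \<le> 4 * a * b * real D"
proof (cases "C \<le> 4 * D")
  case True
  have "real C \<le> 4 * real D" using True by simp
  also have "4 * real D \<le> 4 * (a * b) * real D"
  proof -
    have "1 \<le> a * b" using a b by (metis mult_mono' mult_1 zero_le_one)
    then show ?thesis by (intro mult_right_mono) auto
  qed
  finally show ?thesis by (simp add: mult.assoc)
next
  case False
  show ?thesis
  proof (cases "D = 0")
    case True
    with X have "int C * 2 ^ C \<le> 0" by simp
    then have "C = 0" by (simp add: mult_le_0_iff)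
    with False show ?thesis by simp
  next
    case D: False
    have "int (2*D) \<le> int C - int (2*D)" using False by simp
    then have "int (2*D) * 2 ^ C \<le> (int C - int (2*D)) * 2 ^ C"
      by (intro mult_right_mono) auto
    then have "int (2*D) * 2 ^ C \<le> int m * (int (2 * D) * 2 ^ (2 * D))" using X by (rule order_trans)
    then have "int (2*D) * 2 ^ C \<le> int (2*D) * (int m * 2 ^ (2 * D))" by (simp only: mult.left_commute)
    then have "(2::int) ^ C \<le> int m * 2 ^ (2 * D)" using D by simp
    then have Y: "(2::nat) ^ C \<le> m * 2 ^ (2 * D)" 
    proof -
      have "int (2 ^ C) \<le> int (m * 2 ^ (2 * D))" using \<open>(2::int) ^ C \<le> int m * 2 ^ (2 * D)\<close> by simp
      then show ?thesis by (simp only: of_nat_le_iff)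
    qed
    have "(2::nat) ^ C = 2 ^ (C - 2*D) * 2 ^ (2*D)" using False by (simp add: power_add[symmetric])
    with Y have "(2::nat) ^ (C - 2*D) \<le> m" by simp
    then have P: "(2::nat) ^ (C - 2*D) \<le> m" .
    have "(0::nat) < 2 ^ (C - 2*D)" by simp
    then have "m > 0" using P by linarith
    have "real (C - 2*D) \<le> log 2 (real m)" using le_log2_of_power[OF P] .
    then have "real (C - 2*D) \<le> b" using bm[OF \<open>m > 0\<close>] by linarith
    then have "real C \<le> 2 * real D + b" using False by (simp add: of_nat_diff)
    also have "\<dots> \<le> 2 * real D * b + real D * b"
    proof -
      have "2 * real D * 1 \<le> 2 * real D * b" using b by (intro mult_left_mono) auto
      moreover have "1 * b \<le> real D * b" using D b by (intro mult_right_mono) auto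
      ultimately show ?thesis by linarith
    qed
    also have "\<dots> \<le> 4 * a * b * real D"
    proof -
      have "3 * real D * b \<le> 4 * real D * b" using b by (intro mult_right_mono) auto
      also have "\<dots> * 1 \<le> 4 * real D * b * a" using a b by (intro mult_left_mono) auto
      finally show ?thesis by (simp add: algebra_simps)
    qed
    finally show ?thesis .
  qed
qed

theorem mainTheorem1:
  "\<exists>K::real. \<forall>V E src dst N S u v p pstar.
     graph V E src dst \<and>
     (\<forall>i<N. S i \<noteq> {} \<and> (\<forall>q\<in>S i. is_path E src dst (u i) (v i) q)) \<and>
     nash_routing N S p \<and> optimal_routing E N S pstar \<longrightarrow>
     real (social_cost E N p) \<le>
       K * max 1 (log 2 (real (max_path_length N S))) * max 1 (log 2 (real (card E)))
         * real (social_cost E N pstar)"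
proof (rule exI[of _ 4], intro allI impI, elim conjE)
  fix V E src dst N S u v p pstar
  assume g: "graph V E src dst"
    and ps: "\<forall>i<N. S i \<noteq> {} \<and> (\<forall>q\<in>S i. is_path E src dst (u i) (v i) q)"
    and nash: "nash_routing N S p" and opt: "optimal_routing E N S pstar"
  have fin: "finite E" using g by (simp add: graph_def)
  have paths: "\<And>i q. i < N \<Longrightarrow> q \<in> S i \<Longrightarrow> set q \<subseteq> E" using ps path_sub by blast
  have rs: "routing N S pstar" using opt by (simp add: optimal_routing_def)
  have K: "(\<Sum>e\<in>E. congestion N p e * 2 ^ congestion N p e)
     \<le> (\<Sum>e\<in>E. 2 * social_cost E N pstar * 2 ^ congestion N p e)"
    by (rule key_ineq[OF fin paths nash rs])
  let ?C = "social_cost E N p"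
  let ?a = "max 1 (log 2 (real (max_path_length N S)))"
  let ?b = "max 1 (log 2 (real (card E)))"
  show "real ?C \<le> 4 * ?a * ?b * real (social_cost E N pstar)"
  proof (cases "?C = 0")
    case True
    have "0 \<le> 4 * ?a * ?b * real (social_cost E N pstar)" by simp
    with True show ?thesis by simp
  next
    case False
    have "?C \<in> insert 0 (congestion N p ` E)" unfolding social_cost_def
      using fin by (intro Max_in) auto
    with False obtain e0 where e0: "e0 \<in> E" "congestion N p e0 = ?C" by auto
    have X: "(int ?C - int (2*social_cost E N pstar)) * 2 ^ ?C
      \<le> int (card E) * (int (2 * social_cost E N pstar) * 2 ^ (2 * social_cost E N pstar))"
      using arith_core[OF fin e0(1) K] e0(2) by simp
    show ?thesis by (rule final_bound[OF X]) auto
  qed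
qed

end
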